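(* In the setup below, for every $\omega\in\Omega$ with $p(\omega|x)>0$, $$I_\omega(|\Psi_x^{SE}\rangle):=4\,\langle\partial_x^\perp\Psi_x^{SE}|(\mathbb I\otimes|\pi_\omega^E\rangle\langle\pi_\omega^E|)|\partial_x^\perp\Psi_x^{SE}\rangle\ \ge\ p(\omega|x)\,I(\sigma_{x|\omega})+\frac{(\partial_xp(\omega|x))^2}{p(\omega|x)} .$$ Consequently, for any subset $\checkmark\subseteq\Omega$ of outcomes with $p(\omega|x)>0$ for $\omega\in\checkmark$, $I(|\Psi_x^{SE}\rangle)\ge\sum_{\omega\in\checkmark}p(\omega|x)I(\sigma_{x|\omega})$.
   Context: Setup: finite-dimensional $\mathcal H_S,\mathcal H_E$; unit vectors $|\psi_i\rangle\in\mathcal H_S$, $|\phi_i^E\rangle\in\mathcal H_E$; a $C^1$ family of unitaries $U_x^{SE}$ on $\mathcal H_S\otimes\mathcal H_E$; an orthonormal basis $\{|\pi_\omega^E\rangle\}_{\omega\in\Omega}$ of $\mathcal H_E$. $|\Psi_x^{SE}\rangle=U_x^{SE}(|\psi_i\rangle\otimes|\phi_i^E\rangle)$ and $|\partial_x^\perp\Psi_x^{SE}\rangle=|\partial_x\Psi_x^{SE}\rangle-|\Psi_x^{SE}\rangle\langle\Psi_x^{SE}|\partial_x\Psi_x^{SE}\rangle$. $M_{\omega,x}=\langle\pi_\omega^E|U_x^{SE}|\phi_i^E\rangle$, $|\tilde\psi_{x|\omega}\rangle=M_{\omega,x}|\psi_i\rangle$, $p(\omega|x)=\|\tilde\psi_{x|\omega}\|^2$,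 $\sigma_{x|\omega}=|\tilde\psi_{x|\omega}\rangle\langle\tilde\psi_{x|\omega}|/p(\omega|x)$. QFI of a normalized pure state: $I(|\phi_x\rangle)=4(\langle\partial_x\phi_x|\partial_x\phi_x\rangle-|\langle\phi_x|\partial_x\phi_x\rangle|^2)$. *)

theory Defs
  imports "HOL-Analysis.Analysis"
begin

text \<open>Finite-dimensional Hilbert spaces are modelled as complex^'n for finite index types;
  H_S (x) H_E is complex^('s \<times> 'e); operators are matrices complex^'n^'n.\<close>

definition braket :: "complex^'n \<Rightarrow> complex^'n \<Rightarrow> complex" where
  "braket u v = (\<Sum>i\<in>UNIV. cnj (u$i) * v$i)"

definition csmult :: "complex \<Rightarrow> complex^'n \<Rightarrow> complex^'n" where
  "csmult c v = (\<chi> i. c * v$i)"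

definition tens :: "complex^'s \<Rightarrow> complex^'e \<Rightarrow> complex^('s \<times> 'e)" where
  "tens a b = (\<chi> ij. a$(fst ij) * b$(snd ij))"

definition adjoint_mat :: "complex^'n^'m \<Rightarrow> complex^'m^'n" where
  "adjoint_mat A = (\<chi> i j. cnj (A$j$i))"

definition unitary_mat :: "complex^'n^'n \<Rightarrow> bool" where
  "unitary_mat U \<longleftrightarrow> adjoint_mat U ** U = mat 1"

definition QFI_pure :: "(real \<Rightarrow> complex^'n) \<Rightarrow> real \<Rightarrow> real" where
  "QFI_pure f x = (let d = vector_derivative f (at x) in
      4 * (Re (braket d d) - (cmod (braket (f x) d))^2))"

definition Psi :: "(real \<Rightarrow> complex^('s\<times>'e)^('s\<times>'e)) \<Rightarrow> complex^'s \<Rightarrow> complex^'e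
    \<Rightarrow> real \<Rightarrow> complex^('s\<times>'e)" where
  "Psi U \<psi> \<phi> x = U x *v tens \<psi> \<phi>"

definition dPerp :: "(real \<Rightarrow> complex^'n) \<Rightarrow> real \<Rightarrow> complex^'n" where
  "dPerp f x = (let d = vector_derivative f (at x) in d - csmult (braket (f x) d) (f x))"

text \<open>Kraus operator M_{w,x} = <pi_w| U_x |phi>, an operator on H_S.\<close>
definition kraus :: "(real \<Rightarrow> complex^('s\<times>'e)^('s\<times>'e)) \<Rightarrow> complex^'e \<Rightarrow> complex^'e
    \<Rightarrow> real \<Rightarrow> complex^'s^'s" where
  "kraus U \<phi> \<pi> x = (\<chi> i k. \<Sum>j\<in>UNIV. \<Sum>j'\<in>UNIV. cnj (\<pi>$j) * (U x)$(i,j)$(k,j') * \<phi>$j')"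

definition psit :: "(real \<Rightarrow> complex^('s\<times>'e)^('s\<times>'e)) \<Rightarrow> complex^'s \<Rightarrow> complex^'e
    \<Rightarrow> complex^'e \<Rightarrow> real \<Rightarrow> complex^'s" where
  "psit U \<psi> \<phi> \<pi> x = kraus U \<phi> \<pi> x *v \<psi>"

definition prob :: "(real \<Rightarrow> complex^('s\<times>'e)^('s\<times>'e)) \<Rightarrow> complex^'s \<Rightarrow> complex^'e
    \<Rightarrow> complex^'e \<Rightarrow> real \<Rightarrow> real" where
  "prob U \<psi> \<phi> \<pi> x = (norm (psit U \<psi> \<phi> \<pi> x))^2"

text \<open>QFI of the pure conditional state sigma_{x|w} = |psit><psit|/p, computed from the
  normalized state vector psit/sqrt p (the pure-state QFI is phase invariant).\<close>
definition QFI_cond :: "(real \<Rightarrow> complex^('s\<times>'e)^('s\<times>'e)) \<Rightarrow> complex^'s \<Rightarrow> complex^'e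
    \<Rightarrow> complex^'e \<Rightarrow> real \<Rightarrow> real" where
  "QFI_cond U \<psi> \<phi> \<pi> x =
     QFI_pure (\<lambda>t. (1 / sqrt (prob U \<psi> \<phi> \<pi> t)) *\<^sub>R psit U \<psi> \<phi> \<pi> t) x"

text \<open>(I (x) |pi><pi|) applied to a vector.\<close>
definition proj_E :: "complex^'e::finite \<Rightarrow> complex^('s::finite\<times>'e) \<Rightarrow> complex^('s\<times>'e)" where
  "proj_E \<pi> v = (\<chi> ij. \<pi>$(snd ij) * (\<Sum>j'\<in>UNIV. cnj (\<pi>$j') * v$(fst ij, j')))"

definition I_omega :: "(real \<Rightarrow> complex^('s\<times>'e)^('s\<times>'e)) \<Rightarrow> complex^'s \<Rightarrow> complex^'e
    \<Rightarrow> complex^'e \<Rightarrow> real \<Rightarrow> real" where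
  "I_omega U \<psi> \<phi> \<pi> x =
     4 * Re (braket (dPerp (Psi U \<psi> \<phi>) x) (proj_E \<pi> (dPerp (Psi U \<psi> \<phi>) x)))"

end

theory Submission
  imports Defs
begin



lemma braket_add_left: "braket (a + b) c = braket a c + braket b c"
  by (simp add: braket_def distrib_right sum.distrib)
lemma braket_add_right: "braket c (a + b) = braket c a + braket c b"
  by (simp add: braket_def distrib_left sum.distrib)
lemma braket_diff_left: "braket (a - b) c = braket a c - braket b c"
  by (simp add: braket_def left_diff_distrib sum_subtractf)
lemma braket_diff_right: "braket c (a - b) = braket c a - braket c b"
  by (simp add: braket_def right_diff_distrib sum_subtractf)
lemma braket_scaleR_left: "braket (r *\<^sub>R a) c = of_real r * braket a c"
  by (simp add: braket_def sum_distrib_left scaleR_conv_of_real[where 'a=complex] mult_ac)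
lemma braket_scaleR_right: "braket c (r *\<^sub>R a) = of_real r * braket c a"
  by (simp add: braket_def sum_distrib_left scaleR_conv_of_real[where 'a=complex] mult_ac)
lemma braket_csmult_left: "braket (csmult r a) c = cnj r * braket a c"
  by (simp add: braket_def csmult_def sum_distrib_left mult_ac)
lemma braket_csmult_right: "braket c (csmult r a) = r * braket c a"
  by (simp add: braket_def csmult_def sum_distrib_left mult_ac)
lemma braket_cnj: "braket b a = cnj (braket a b)"
  by (simp add: braket_def mult.commute)
lemma Re_braket: "Re (braket a b) = inner a b"
  by (simp add: braket_def inner_vec_def inner_complex_def Re_sum)
lemma braket_self: "braket a a = of_real (norm a ^ 2)"
proof -
  have "braket a a = (\<Sum>i\<in>UNIV. of_real ((cmod (a$i))^2))"
    unfolding braket_def by (rule sum.cong) (auto, metis complex_norm_square mult.commute of_real_power)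
  also have "\<dots> = of_real (\<Sum>i\<in>UNIV. (cmod (a$i))^2)" by simp
  also have "(\<Sum>i\<in>UNIV. (cmod (a$i))^2) = norm a ^2"
    by (simp add: norm_vec_def L2_set_def sum_nonneg)
  finally show ?thesis .
qed

lemma norm_sq_deriv:
  fixes f :: "real \<Rightarrow> complex^'s"
  assumes df: "(f has_vector_derivative f') (at x)"
  shows "((\<lambda>t. norm (f t)^2) has_real_derivative (2 * inner (f x) f')) (at x)"
proof -
  have "((\<lambda>t. inner (f t) (f t)) has_vector_derivative (inner (f x) f' + inner f' (f x))) (at x)"
    by (rule bounded_bilinear.has_vector_derivative[OF bounded_bilinear_inner df df])
  then show ?thesis
    by (simp add: has_real_derivative_iff_has_vector_derivative power2_norm_eq_inner inner_commute)
qed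

lemma key:
  fixes f :: "real \<Rightarrow> complex^'s"
  assumes df: "(f has_vector_derivative f') (at x)" and pos: "norm (f x) > 0" and c: "Re c = 0"
  shows "norm (f x)^2 * QFI_pure (\<lambda>t. (1 / sqrt (norm (f t)^2)) *\<^sub>R f t) x
           + (deriv (\<lambda>t. norm (f t)^2) x)^2 / norm (f x)^2
         \<le> 4 * norm (f' - csmult c (f x))^2"
proof -
  define q where "q = norm (f x)"
  define a where "a = inner (f x) f'"
  define B where "B = braket (f x) f'"
  define N where "N = norm f' ^ 2"
  have q: "q > 0" using pos q_def by simp
  have ReB: "Re B = a" by (simp add: B_def a_def Re_braket)
  have dp: "((\<lambda>t. norm (f t)^2) has_real_derivative (2 * a)) (at x)"
    using norm_sq_deriv[OF df] a_def by simp
  have deriv: "deriv (\<lambda>t. norm (f t)^2) x = 2 * a"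
    by (rule DERIV_imp_deriv[OF dp])
  have ds: "((\<lambda>t. 1 / sqrt (norm (f t)^2)) has_real_derivative (- a / q^3)) (at x)"
  proof -
    have sq: "sqrt (norm (f x)^2) = q" by (simp add: q_def)
    have d1: "((\<lambda>t. sqrt (norm (f t)^2)) has_real_derivative (inverse (sqrt (norm (f x)^2)) / 2 * (2 * a))) (at x)"
      by (rule DERIV_chain2[OF DERIV_real_sqrt dp]) (use pos in simp)
    have d2: "((\<lambda>t. inverse (sqrt (norm (f t)^2))) has_real_derivative
       (- ((inverse (sqrt (norm (f x)^2)) / 2 * (2 * a)) * inverse (sqrt (norm (f x)^2) ^ Suc (Suc 0))))) (at x)"
      by (rule DERIV_inverse_fun[OF d1]) (use pos in simp)
    have e: "- ((inverse (sqrt (norm (f x)^2)) / 2 * (2 * a)) * inverse (sqrt (norm (f x)^2) ^ Suc (Suc 0))) = - a / q^3"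
      unfolding sq using q by (simp add: divide_simps power3_eq_cube power2_eq_square)
    show ?thesis using d2 unfolding e by (simp add: inverse_eq_divide)
  qed
  have dg: "((\<lambda>t. (1 / sqrt (norm (f t)^2)) *\<^sub>R f t) has_vector_derivative
      ((1/q) *\<^sub>R f' + (- a / q^3) *\<^sub>R f x)) (at x)"
    using has_vector_derivative_scaleR[OF ds df] by (simp add: q_def)
  have Q: "QFI_pure (\<lambda>t. (1 / sqrt (norm (f t)^2)) *\<^sub>R f t) x =
     4 * (Re (braket ((1/q) *\<^sub>R f' + (- a / q^3) *\<^sub>R f x) ((1/q) *\<^sub>R f' + (- a / q^3) *\<^sub>R f x))
       - (cmod (braket ((1/q) *\<^sub>R f x) ((1/q) *\<^sub>R f' + (- a / q^3) *\<^sub>R f x)))^2)"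
    unfolding QFI_pure_def Let_def vector_derivative_at[OF dg] by (simp add: q_def)
  obtain \<beta> where cb: "c = \<i> * of_real \<beta>" using c by (metis complex_eq mult_zero_left add_0 of_real_0 mult.commute) 
  have ff: "braket (f x) (f x) = of_real (q^2)" by (simp add: braket_self q_def)
  have f'f': "braket f' f' = of_real N" by (simp add: braket_self N_def)
  have f'f: "braket f' (f x) = cnj B" by (simp add: B_def braket_cnj[of f'])
  have L: "norm (f' - csmult c (f x))^2 = N - 2 * \<beta> * Im B + \<beta>^2 * q^2"
  proof -
    have "norm (f' - csmult c (f x))^2 = Re (braket (f' - csmult c (f x)) (f' - csmult c (f x)))"
      by (simp add: braket_self)
    also have "\<dots> = N - 2 * \<beta> * Im B + \<beta>^2 * q^2"
      by (simp add: braket_diff_left braket_diff_right braket_csmult_left braket_csmult_right ff f'f' f'f B_def[symmetric] cb power2_eq_square algebra_simps)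
    finally show ?thesis .
  qed
  have R0: "\<And>s r. Re (braket (s *\<^sub>R f' + r *\<^sub>R f x) (s *\<^sub>R f' + r *\<^sub>R f x))
       - (cmod (braket (s *\<^sub>R f x) (s *\<^sub>R f' + r *\<^sub>R f x)))^2
       = s^2 * N + 2 * s * r * a + r^2 * q^2 - ((s^2 * a + s * r * q^2)^2 + (s^2 * Im B)^2)"
    by (simp add: braket_add_left braket_add_right braket_scaleR_left braket_scaleR_right ff f'f' f'f B_def[symmetric] cmod_power2 ReB) (simp add: power2_eq_square algebra_simps ReB)
  have R: "Re (braket ((1/q) *\<^sub>R f' + (- a / q^3) *\<^sub>R f x) ((1/q) *\<^sub>R f' + (- a / q^3) *\<^sub>R f x))
       - (cmod (braket ((1/q) *\<^sub>R f x) ((1/q) *\<^sub>R f' + (- a / q^3) *\<^sub>R f x)))^2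
       = N / q^2 - (a^2 + (Im B)^2) / q^4"
    unfolding R0 using q by (simp add: divide_simps power2_eq_square power3_eq_cube) (simp add: algebra_simps power4_eq_xxxx)
  show ?thesis
  proof -
    have e: "q^2 * (4 * (N / q^2 - (a^2 + (Im B)^2) / q^4)) + (2 * a)^2 / q^2 = 4 * N - 4 * (Im B)^2 / q^2"
      using q by (simp add: divide_simps power2_eq_square power4_eq_xxxx)
    have "4 * (N - 2 * \<beta> * Im B + \<beta>^2 * q^2) - (4 * N - 4 * (Im B)^2 / q^2) = 4 * (\<beta> * q - Im B / q)^2"
      using q by (simp add: divide_simps power2_eq_square) (simp add: algebra_simps)
    then have "4 * N - 4 * (Im B)^2 / q^2 \<le> 4 * (N - 2 * \<beta> * Im B + \<beta>^2 * q^2)"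
      by (smt (verit) zero_le_power2)
    then have G: "q^2 * (4 * (N / q^2 - (a^2 + (Im B)^2) / q^4)) + (2 * a)^2 / q^2 \<le> 4 * (N - 2 * \<beta> * Im B + \<beta>^2 * q^2)"
      by (simp only: e)
    have Q2: "QFI_pure (\<lambda>t. (1 / sqrt (norm (f t)^2)) *\<^sub>R f t) x = 4 * (N / q^2 - (a^2 + (Im B)^2) / q^4)"
      unfolding Q R by (rule refl)
    have nq: "norm (f x) = q" by (simp add: q_def)
    have E1: "norm (f x)^2 * QFI_pure (\<lambda>t. (1 / sqrt (norm (f t)^2)) *\<^sub>R f t) x
           + (deriv (\<lambda>t. norm (f t)^2) x)^2 / norm (f x)^2
         = q^2 * (4 * (N / q^2 - (a^2 + (Im B)^2) / q^4)) + (2 * a)^2 / q^2"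
      unfolding Q2 deriv nq by (rule refl)
    have E2: "4 * norm (f' - csmult c (f x))^2 = 4 * (N - 2 * \<beta> * Im B + \<beta>^2 * q^2)"
      using L by simp
    show ?thesis unfolding E1 E2 by (rule G)
  qed
qed




lemma sum_swap3: "(\<Sum>k\<in>A. \<Sum>j\<in>B. \<Sum>j'\<in>C. F k j j') = (\<Sum>j\<in>B. \<Sum>j'\<in>C. \<Sum>k\<in>A. F k j j')"
proof -
  have "(\<Sum>k\<in>A. \<Sum>j\<in>B. \<Sum>j'\<in>C. F k j j') = (\<Sum>j\<in>B. \<Sum>k\<in>A. \<Sum>j'\<in>C. F k j j')"
    by (rule sum.swap)
  also have "\<dots> = (\<Sum>j\<in>B. \<Sum>j'\<in>C. \<Sum>k\<in>A. F k j j')"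
    by (rule sum.cong[OF refl]) (rule sum.swap)
  finally show ?thesis .
qed

lemma parseval:
  fixes \<pi> :: "'w::finite \<Rightarrow> complex^'e::finite" and u :: "complex^'e"
  assumes orth: "\<And>w w'. braket (\<pi> w) (\<pi> w') = (if w = w' then 1 else 0)"
    and card: "CARD('w) = CARD('e)"
  shows "(\<Sum>w\<in>UNIV. (cmod (braket (\<pi> w) u))^2) = norm u ^ 2"
proof -
  obtain h where h: "bij_betw h (UNIV::'e set) (UNIV::'w set)"
    using finite_same_card_bij[of "UNIV::'e set" "UNIV::'w set"] card by auto
  have hinj: "h k = h k' \<longleftrightarrow> k = k'" for k k' using h by (auto simp: bij_betw_def inj_eq)
  define Q :: "complex^'e^'e" where "Q = (\<chi> k j. \<pi> (h k) $ j)"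
  have "Q ** adjoint_mat Q = mat 1"
  proof -
    have "(\<Sum>j\<in>UNIV. \<pi> (h k) $ j * cnj (\<pi> (h k') $ j)) = (if k = k' then 1 else 0)" for k k'
      using orth[of "h k'" "h k"] by (simp add: braket_def hinj mult.commute eq_commute)
    then show ?thesis
      by (simp add: Q_def adjoint_mat_def matrix_matrix_mult_def mat_def vec_eq_iff)
  qed
  then have QQ: "adjoint_mat Q ** Q = mat 1" by (simp add: matrix_left_right_inverse)
  have QQ': "(\<Sum>k\<in>UNIV. cnj (\<pi> (h k) $ j) * \<pi> (h k) $ j') = (if j = j' then 1 else 0)" for j j'
    using arg_cong[OF QQ, of "\<lambda>M. M $ j $ j'"]
    by (simp add: Q_def adjoint_mat_def matrix_matrix_mult_def mat_def)
  have "(\<Sum>w\<in>UNIV. (cmod (braket (\<pi> w) u))^2) = (\<Sum>k\<in>UNIV. (cmod (braket (\<pi> (h k)) u))^2)"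
    using sum.reindex_bij_betw[OF h, of "\<lambda>w. (cmod (braket (\<pi> w) u))^2"] by simp
  also have "complex_of_real \<dots> = (\<Sum>k\<in>UNIV. braket (\<pi> (h k)) u * cnj (braket (\<pi> (h k)) u))"
    unfolding of_real_sum by (rule sum.cong) (simp_all only: complex_norm_square)
  also have "\<dots> = (\<Sum>k\<in>UNIV. \<Sum>j\<in>UNIV. \<Sum>j'\<in>UNIV. (u $ j * cnj (u $ j')) * (cnj (\<pi> (h k) $ j) * \<pi> (h k) $ j'))"
    by (simp add: braket_def sum_product cnj_sum mult_ac)
  also have "\<dots> = (\<Sum>j\<in>UNIV. \<Sum>j'\<in>UNIV. (u $ j * cnj (u $ j')) * (\<Sum>k\<in>UNIV. cnj (\<pi> (h k) $ j) * \<pi> (h k) $ j'))"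
    by (rule trans[OF sum_swap3]) (simp add: sum_distrib_left)
  also have "\<dots> = (\<Sum>j\<in>UNIV. u $ j * cnj (u $ j))"
    by (simp add: QQ' if_distrib[of "\<lambda>z. _ * z"] sum.delta' cong: if_cong)
  also have "\<dots> = braket u u" by (simp add: braket_def mult.commute)
  also have "\<dots> = complex_of_real (norm u ^ 2)" by (rule braket_self)
  finally show ?thesis by (simp only: of_real_eq_iff)
qed



definition Lpi :: "complex^'e::finite \<Rightarrow> complex^('s::finite\<times>'e) \<Rightarrow> complex^'s" where
  "Lpi \<pi> v = (\<chi> i. \<Sum>j\<in>UNIV. cnj (\<pi>$j) * v$(i,j))"

lemma norm_sq_vec: "norm (v::complex^'n)^2 = (\<Sum>i\<in>UNIV. (cmod (v$i))^2)"
  by (simp add: norm_vec_def L2_set_def sum_nonneg)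

lemma Lpi_linear: "bounded_linear (Lpi \<pi>)"
proof -
  have "linear (Lpi \<pi>)"
    by (rule linearI) (simp_all add: Lpi_def vec_eq_iff sum.distrib distrib_left
        scaleR_conv_of_real[where 'a=complex] sum_distrib_left mult_ac)
  then show ?thesis by (simp add: linear_conv_bounded_linear)
qed

lemma mv_linear: "bounded_linear (\<lambda>M::complex^'n::finite^'m::finite. M *v w)"
proof -
  have "linear (\<lambda>M::complex^'n^'m. M *v w)"
    by (rule linearI) (simp_all add: matrix_vector_mult_def vec_eq_iff sum.distrib ring_distribs
        scaleR_conv_of_real[where 'a=complex] sum_distrib_left mult_ac)
  then show ?thesis by (simp add: linear_conv_bounded_linear)
qed

lemma Lpi_diff_csmult: "Lpi \<pi> (a - csmult c b) = Lpi \<pi> a - csmult c (Lpi \<pi> b)"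
  by (simp add: Lpi_def csmult_def vec_eq_iff right_diff_distrib sum_subtractf sum_distrib_left mult_ac)

lemma sum_pair: "(\<Sum>p\<in>(UNIV::('a::finite\<times>'b::finite) set). g p) = (\<Sum>a\<in>UNIV. \<Sum>b\<in>UNIV. g (a,b))"
  by (simp add: UNIV_Times_UNIV[symmetric] sum.cartesian_product del: UNIV_Times_UNIV)

lemma psit_Lpi: "psit U \<psi> \<phi> \<pi> t = Lpi \<pi> (Psi U \<psi> \<phi> t)"
  unfolding psit_def Psi_def kraus_def Lpi_def
  apply (simp add: vec_eq_iff matrix_vector_mult_def tens_def sum_pair sum_distrib_left sum_distrib_right
      mult_ac)
  apply (intro allI)
  apply (rule sum.swap)
  done

lemma proj_Lpi: "braket v (proj_E \<pi> v) = braket (Lpi \<pi> v) (Lpi \<pi> v)"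
  unfolding braket_def proj_E_def Lpi_def
  apply (simp add: sum_pair sum_distrib_left sum_distrib_right mult_ac)
  apply (rule sum.cong[OF refl])
  apply (rule sum.swap)
  done




lemma Lpi_parseval:
  fixes \<pi> :: "'w::finite \<Rightarrow> complex^'e::finite" and v :: "complex^('s::finite\<times>'e)"
  assumes orth: "\<And>w w'. braket (\<pi> w) (\<pi> w') = (if w = w' then 1 else 0)"
    and card: "CARD('w) = CARD('e)"
  shows "(\<Sum>w\<in>UNIV. norm (Lpi (\<pi> w) v)^2) = norm v ^ 2"
proof -
  define row :: "'s \<Rightarrow> complex^'e" where "row i = (\<chi> j. v $ (i,j))" for i
  have "(\<Sum>w\<in>UNIV. norm (Lpi (\<pi> w) v)^2) = (\<Sum>w\<in>UNIV. \<Sum>i\<in>UNIV. (cmod (braket (\<pi> w) (row i)))^2)"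
    by (simp add: norm_sq_vec Lpi_def braket_def row_def)
  also have "\<dots> = (\<Sum>i\<in>UNIV. \<Sum>w\<in>UNIV. (cmod (braket (\<pi> w) (row i)))^2)"
    by (rule sum.swap)
  also have "\<dots> = (\<Sum>i\<in>UNIV. norm (row i)^2)"
    by (simp add: parseval[OF orth card])
  also have "\<dots> = norm v ^ 2"
    by (simp add: norm_sq_vec row_def sum_pair)
  finally show ?thesis .
qed

lemma unitary_norm:
  assumes "unitary_mat U"
  shows "norm (U *v (v::complex^'n::finite)) = norm v"
proof -
  have UU: "(\<Sum>i\<in>UNIV. cnj (U $ i $ k) * U $ i $ k') = (if k = k' then 1 else 0)" for k k'
    using arg_cong[OF assms[unfolded unitary_mat_def], of "\<lambda>M. M $ k $ k'"]
    by (simp add: adjoint_mat_def matrix_matrix_mult_def mat_def)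
  have "complex_of_real (norm (U *v v) ^ 2) = braket (U *v v) (U *v v)" by (simp add: braket_self)
  also have "\<dots> = (\<Sum>i\<in>UNIV. \<Sum>k\<in>UNIV. \<Sum>k'\<in>UNIV. (cnj (v $ k) * v $ k') * (cnj (U $ i $ k) * U $ i $ k'))"
    apply (simp add: braket_def matrix_vector_mult_def sum_product mult_ac)
    apply (rule sum.cong[OF refl], rule sum.swap)
    done
  also have "\<dots> = (\<Sum>k\<in>UNIV. \<Sum>k'\<in>UNIV. (cnj (v $ k) * v $ k') * (\<Sum>i\<in>UNIV. cnj (U $ i $ k) * U $ i $ k'))"
    by (rule trans[OF sum_swap3]) (simp add: sum_distrib_left)
  also have "\<dots> = braket v v"
    by (simp add: UU braket_def if_distrib[of "\<lambda>z. _ * z"] sum.delta' cong: if_cong)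
  also have "\<dots> = complex_of_real (norm v ^ 2)" by (rule braket_self)
  finally have "norm (U *v v) ^ 2 = norm v ^ 2" by (simp only: of_real_eq_iff)
  then show ?thesis by (simp add: power2_eq_iff_nonneg)
qed

lemma tens_norm: "norm (tens (a::complex^'s::finite) (b::complex^'e::finite)) = norm a * norm b"
proof -
  have "norm (tens a b) ^ 2 = (norm a * norm b)^2"
    by (simp add: norm_sq_vec tens_def sum_pair power_mult_distrib norm_mult sum_product)
  then show ?thesis by (simp add: power2_eq_iff_nonneg)
qed



theorem mainTheorem5:
  fixes U :: "real \<Rightarrow> complex^('s::finite \<times> 'e::finite)^('s \<times> 'e)"
    and \<psi> :: "complex^'s" and \<phi> :: "complex^'e"
    and \<pi> :: "'w::finite \<Rightarrow> complex^'e"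
    and x :: real
  assumes psi_unit: "norm \<psi> = 1"
    and phi_unit: "norm \<phi> = 1"
    and unitary: "\<And>t. unitary_mat (U t)"
    and C1: "U C1_differentiable_on UNIV"
    and onb_orth: "\<And>w w'. braket (\<pi> w) (\<pi> w') = (if w = w' then 1 else 0)"
    and onb_card: "CARD('w) = CARD('e)"
  shows "(\<forall>w. prob U \<psi> \<phi> (\<pi> w) x > 0 \<longrightarrow>
            I_omega U \<psi> \<phi> (\<pi> w) x \<ge>
              prob U \<psi> \<phi> (\<pi> w) x * QFI_cond U \<psi> \<phi> (\<pi> w) x
              + (deriv (\<lambda>t. prob U \<psi> \<phi> (\<pi> w) t) x)^2 / prob U \<psi> \<phi> (\<pi> w) x)
       \<and> (\<forall>A :: 'w set. (\<forall>w\<in>A. prob U \<psi> \<phi> (\<pi> w) x > 0) \<longrightarrow>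
            QFI_pure (Psi U \<psi> \<phi>) x \<ge>
              (\<Sum>w\<in>A. prob U \<psi> \<phi> (\<pi> w) x * QFI_cond U \<psi> \<phi> (\<pi> w) x))"
proof -
  obtain D where D: "\<And>t. (U has_vector_derivative D t) (at t)"
    using C1 unfolding C1_differentiable_on_def by auto
  define w0 where "w0 = tens \<psi> \<phi>"
  have PsiU: "Psi U \<psi> \<phi> = (\<lambda>t. U t *v w0)" by (simp add: fun_eq_iff Psi_def w0_def)
  define d where "d = D x *v w0"
  define P where "P = Psi U \<psi> \<phi> x"
  have dPsi: "(Psi U \<psi> \<phi> has_vector_derivative d) (at x)"
    unfolding PsiU d_def by (rule bounded_linear.has_vector_derivative[OF mv_linear D])
  have normPsi: "norm (Psi U \<psi> \<phi> t) = 1" for t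
    by (simp add: PsiU unitary_norm[OF unitary] w0_def tens_norm psi_unit phi_unit)
  define c where "c = braket P d"
  have "((\<lambda>t. norm (Psi U \<psi> \<phi> t)^2) has_real_derivative (2 * inner P d)) (at x)"
    using norm_sq_deriv[OF dPsi] by (simp add: P_def)
  moreover have "((\<lambda>t. norm (Psi U \<psi> \<phi> t)^2) has_real_derivative 0) (at x)"
    by (simp add: normPsi)
  ultimately have "2 * inner P d = 0" by (rule DERIV_unique)
  then have c0: "Re c = 0" by (simp add: c_def Re_braket)
  have dperp: "dPerp (Psi U \<psi> \<phi>) x = d - csmult c P"
    unfolding dPerp_def Let_def vector_derivative_at[OF dPsi] c_def P_def ..
  have dpsit: "(psit U \<psi> \<phi> (\<pi> w) has_vector_derivative Lpi (\<pi> w) d) (at x)" for w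
  proof -
    have "psit U \<psi> \<phi> (\<pi> w) = (\<lambda>t. Lpi (\<pi> w) (Psi U \<psi> \<phi> t))" by (simp add: fun_eq_iff psit_Lpi)
    then show ?thesis using bounded_linear.has_vector_derivative[OF Lpi_linear dPsi] by simp
  qed
  have Iom: "I_omega U \<psi> \<phi> (\<pi> w) x = 4 * norm (Lpi (\<pi> w) d - csmult c (psit U \<psi> \<phi> (\<pi> w) x))^2" for w
    unfolding I_omega_def dperp proj_Lpi braket_self Lpi_diff_csmult by (simp add: psit_Lpi P_def)
  have Iom': "I_omega U \<psi> \<phi> (\<pi> w) x = 4 * norm (Lpi (\<pi> w) (d - csmult c P))^2" for w
    unfolding I_omega_def dperp proj_Lpi braket_self by simp
  have part1: "I_omega U \<psi> \<phi> (\<pi> w) x \<ge>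
              prob U \<psi> \<phi> (\<pi> w) x * QFI_cond U \<psi> \<phi> (\<pi> w) x
              + (deriv (\<lambda>t. prob U \<psi> \<phi> (\<pi> w) t) x)^2 / prob U \<psi> \<phi> (\<pi> w) x"
    if pos: "prob U \<psi> \<phi> (\<pi> w) x > 0" for w
  proof -
    have "norm (psit U \<psi> \<phi> (\<pi> w) x) > 0" using pos by (simp add: prob_def)
    from key[OF dpsit this c0] show ?thesis
      unfolding Iom prob_def QFI_cond_def .
  qed
  have QPsi: "QFI_pure (Psi U \<psi> \<phi>) x = 4 * norm (d - csmult c P)^2"
  proof -
    have PP: "braket P P = 1" by (simp add: braket_self P_def normPsi)
    have "norm (d - csmult c P)^2 = Re (braket (d - csmult c P) (d - csmult c P))"
      by (simp add: braket_self)
    also have "\<dots> = Re (braket d d) - (cmod c)^2"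
      by (simp add: braket_diff_left braket_diff_right braket_csmult_left braket_csmult_right PP
          braket_cnj[of d P] c_def[symmetric]) (smt (verit) cmod_power2 power2_eq_square)
    finally show ?thesis
      unfolding QFI_pure_def Let_def vector_derivative_at[OF dPsi] by (simp add: P_def c_def)
  qed
  have part2: "QFI_pure (Psi U \<psi> \<phi>) x \<ge> (\<Sum>w\<in>A. prob U \<psi> \<phi> (\<pi> w) x * QFI_cond U \<psi> \<phi> (\<pi> w) x)"
    if A: "\<forall>w\<in>A. prob U \<psi> \<phi> (\<pi> w) x > 0" for A :: "'w set"
  proof -
    have "QFI_pure (Psi U \<psi> \<phi>) x = (\<Sum>w\<in>UNIV. I_omega U \<psi> \<phi> (\<pi> w) x)"
      unfolding QPsi Iom' by (simp add: sum_distrib_left[symmetric] Lpi_parseval[OF onb_orth onb_card])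
    also have "\<dots> \<ge> (\<Sum>w\<in>A. I_omega U \<psi> \<phi> (\<pi> w) x)"
      by (rule sum_mono2) (auto simp: Iom')
    also have "(\<Sum>w\<in>A. I_omega U \<psi> \<phi> (\<pi> w) x) \<ge> (\<Sum>w\<in>A. prob U \<psi> \<phi> (\<pi> w) x * QFI_cond U \<psi> \<phi> (\<pi> w) x)"
    proof (rule sum_mono)
      fix w assume "w \<in> A"
      then have p: "prob U \<psi> \<phi> (\<pi> w) x > 0" using A by auto
      have "0 \<le> (deriv (\<lambda>t. prob U \<psi> \<phi> (\<pi> w) t) x)^2 / prob U \<psi> \<phi> (\<pi> w) x"
        using p by simp
      then show "prob U \<psi> \<phi> (\<pi> w) x * QFI_cond U \<psi> \<phi> (\<pi> w) x \<le> I_omega U \<psi> \<phi> (\<pi> w) x"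
        using part1[OF p] by linarith
    qed
    finally show ?thesis .
  qed
  show ?thesis using part1 part2 by blast
qed


end
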